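(* The convex set $R(\tfrac12\Delta(\mathfrak p,\mathfrak t_f))=\{\sum_{\alpha\in\Delta(\mathfrak p,\mathfrak t_f)}\tfrac{b_\alpha}{2}\alpha : 0\le b_\alpha\le 1\}$ equals the convex hull of all extremal weights of the spin module $S_G$, i.e. the convex hull of $\{w\rho_n^{(j)}: w\in W(\mathfrak k,\mathfrak t_f),\ 0\le j\le s-1\}$.
   Context: Setting: $G(\mathbb R)$ a real form of a complex connected simple group, Cartan involution $\theta$, complexified Cartan decomposition $\mathfrak g=\mathfrak k\oplus\mathfrak p$, $\mathfrak h_f=\mathfrak t_f\oplus\mathfrak a_f$ the fundamental $\theta$-stable Cartan subalgebra with $\mathfrak t_{f,0}$ maximal abelian in $\mathfrak k_0$; assume $\mathfrak k$ has no center. $\Delta(\mathfrak p,\mathfrak t_f)$ is the set of nonzero $\mathfrak t_f$-weights of $\mathfrak p$; $\Delta(\mathfrak g,\mathfrak t_f)=\Delta(\mathfrak k,\mathfrak t_f)\cup\Delta(\mathfrak p,\mathfrak t_f)$ the (possibly nonreduced) restricted root system with a positive system $\Delta^+(\mathfrak g,\mathfrak t_f)=\Delta^+(\mathfrak k,\mathfrak t_f)\cup\Delta^+(\mathfrak p,\mathfrak t_f)$, $\Delta^+(\mathfrak k,\mathfrak t_f)$ fixed. Let $C$ be the dominant chamber of $\Delta^+(\mathfrak k,\mathfrak t_f)$ and $C_{\mathfrak g}$ that of $\Delta^+(\mathfrak g,\mathfrak t_f)$ in $i\mathfrak t_{f,0}^*$; $W(\mathfrak g,\mathfrak t_f)^1=\{w\in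 W(\mathfrak g,\mathfrak t_f): w(C_{\mathfrak g})\subseteq C\}=\{w^{(0)}=e,\dots,w^{(s-1)}\}$. $\rho_n^{(j)}$ is half the sum of the roots of $w^{(j)}\Delta^+(\mathfrak p,\mathfrak t_f)$. The spin module $S_G$ of $C(\mathfrak p)$ decomposes as a $\mathfrak k$-module into copies of the irreducible modules with highest weights $\rho_n^{(j)}$, $0\le j\le s-1$. *)

theory Defs
  imports "HOL-Analysis.Analysis"
begin

text \<open>Combinatorial model of the weight data on i t_{f,0}^* (a Euclidean space,
  inner product induced by the Killing form).\<close>

definition refl :: "'a::euclidean_space \<Rightarrow> 'a \<Rightarrow> 'a" where
  "refl \<alpha> x = x - (2 * (x \<bullet> \<alpha>) / (\<alpha> \<bullet> \<alpha>)) *\<^sub>R \<alpha>"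

definition root_system :: "'a::euclidean_space set \<Rightarrow> bool" where
  "root_system D \<longleftrightarrow> finite D \<and> 0 \<notin> D \<and>
     (\<forall>\<alpha>\<in>D. refl \<alpha> ` D \<subseteq> D) \<and>
     (\<forall>\<alpha>\<in>D. \<forall>\<beta>\<in>D. 2 * (\<beta> \<bullet> \<alpha>) / (\<alpha> \<bullet> \<alpha>) \<in> \<int>)"

inductive_set weyl :: "'a::euclidean_space set \<Rightarrow> ('a \<Rightarrow> 'a) set" for D where
  weyl_id: "id \<in> weyl D"
| weyl_step: "\<alpha> \<in> D \<Longrightarrow> w \<in> weyl D \<Longrightarrow> refl \<alpha> \<circ> w \<in> weyl D"

definition positive_system :: "'a::euclidean_space set \<Rightarrow> 'a set \<Rightarrow> bool" where
  "positive_system D P \<longleftrightarrow>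
     (\<exists>l. (\<forall>\<alpha>\<in>D. l \<bullet> \<alpha> \<noteq> 0) \<and> P = {\<alpha>\<in>D. l \<bullet> \<alpha> > 0})"

definition chamber :: "'a::euclidean_space set \<Rightarrow> 'a set" where
  "chamber P = {l. \<forall>\<alpha>\<in>P. l \<bullet> \<alpha> > 0}"

definition weyl_one :: "'a::euclidean_space set \<Rightarrow> 'a set \<Rightarrow> 'a set \<Rightarrow> ('a \<Rightarrow> 'a) set" where
  "weyl_one Dg Dgplus Dkplus = {w \<in> weyl Dg. w ` chamber Dgplus \<subseteq> chamber Dkplus}"

definition rho_n :: "'a::euclidean_space set \<Rightarrow> 'a set \<Rightarrow> ('a \<Rightarrow> 'a) \<Rightarrow> 'a" where
  "rho_n Dp Dgplus w = (1/2) *\<^sub>R (\<Sum>\<beta> \<in> {\<beta>\<in>Dp. \<beta> \<in> w ` Dgplus}. \<beta>)"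

definition R_half :: "'a::euclidean_space set \<Rightarrow> 'a set" where
  "R_half Dp = {(\<Sum>\<alpha>\<in>Dp. (b \<alpha> / 2) *\<^sub>R \<alpha>) | b. \<forall>\<alpha>\<in>Dp. 0 \<le> b \<alpha> \<and> b \<alpha> \<le> 1}"

end

theory Submission imports Defs begin

lemma refl_add: "refl a (x + y) = refl a x + refl a y"
  unfolding refl_def inner_add_left add_divide_distrib distrib_left scaleR_add_left by (simp add: algebra_simps)

lemma refl_scale: "refl a (c *\<^sub>R x) = c *\<^sub>R refl a x"
  unfolding refl_def inner_scaleR_left by (simp add: scaleR_diff_right)

lemma refl_linear: "linear (refl a)"
  by (rule linearI) (simp_all only: refl_add refl_scale)

lemma refl_inner: "a \<noteq> 0 \<Longrightarrow> refl a x \<bullet> refl a y = x \<bullet> y"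
  by (simp add: refl_def inner_diff_left inner_diff_right field_simps inner_commute)

lemma refl_invol: "a \<noteq> 0 \<Longrightarrow> refl a (refl a x) = x"
  by (simp add: refl_def inner_diff_left field_simps)

lemma refl_self: "a \<noteq> 0 \<Longrightarrow> refl a a = - a"
  by (simp add: refl_def scaleR_2)

lemma weyl_linear: "w \<in> weyl D \<Longrightarrow> linear w"
proof (induction rule: weyl.induct)
  case weyl_id then show ?case by (simp add: linearI)
next
  case (weyl_step a w) then show ?case using linear_compose[OF weyl_step(3) refl_linear[of a]] by (simp add: comp_def)
qed

lemma weyl_inner: "w \<in> weyl D \<Longrightarrow> 0 \<notin> D \<Longrightarrow> w x \<bullet> w y = x \<bullet> y"
proof (induction arbitrary: x y rule: weyl.induct)
  case weyl_id then show ?case by simp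
next
  case (weyl_step a w x y) then have "a \<noteq> 0" by auto
  then show ?case by (simp add: refl_inner weyl_step)
qed

lemma weyl_maps: "w \<in> weyl D \<Longrightarrow> \<forall>a\<in>D. refl a ` D \<subseteq> D \<Longrightarrow> x \<in> D \<Longrightarrow> w x \<in> D"
  by (induction arbitrary: x rule: weyl.induct) auto

lemma weyl_right: "w \<in> weyl D \<Longrightarrow> a \<in> D \<Longrightarrow> w \<circ> refl a \<in> weyl D"
proof (induction rule: weyl.induct)
  case weyl_id
  have "refl a \<circ> id \<in> weyl D" by (rule weyl.weyl_step[OF weyl_id weyl.weyl_id])
  then show ?case by simp
next
  case (weyl_step b w)
  then show ?case by (metis comp_assoc weyl.weyl_step)
qed

lemma weyl_inv: "w \<in> weyl D \<Longrightarrow> 0 \<notin> D \<Longrightarrow> \<exists>v\<in>weyl D. \<forall>x. v (w x) = x \<and> w (v x) = x"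
proof (induction rule: weyl.induct)
  case weyl_id
  then show ?case using weyl.weyl_id[of D] by (intro bexI[of _ id]) auto
next
  case (weyl_step a w)
  then obtain v where v: "v \<in> weyl D" "\<forall>x. v (w x) = x \<and> w (v x) = x" by auto
  have "a \<noteq> 0" using weyl_step by auto
  then show ?case using v weyl_right[OF v(1) weyl_step(1)]
    by (intro bexI[of _ "v \<circ> refl a"]) (auto simp: refl_invol)
qed


lemma rs_facts:
  assumes "root_system D"
  shows "finite D" "0 \<notin> D" "\<forall>a\<in>D. refl a ` D \<subseteq> D" "\<And>a. a \<in> D \<Longrightarrow> - a \<in> D"
proof -
  show f: "finite D" "0 \<notin> D" "\<forall>a\<in>D. refl a ` D \<subseteq> D" using assms by (auto simp: root_system_def)
  fix a assume "a \<in> D"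
  then have "refl a a \<in> D" "a \<noteq> 0" using f by auto
  then show "- a \<in> D" by (simp add: refl_self)
qed

lemma span_eq_det:
  assumes "span D = UNIV" "\<forall>b\<in>D. x \<bullet> b = y \<bullet> b"
  shows "x = y"
proof -
  have "orthogonal (x - y) (x - y)"
    by (rule orthogonal_to_span[of _ D]) (use assms in \<open>auto simp: orthogonal_def inner_diff_left\<close>)
  then show ?thesis by (simp add: orthogonal_def)
qed

lemma weyl_adj:
  assumes "w \<in> weyl D" "root_system D" "b \<in> D"
  shows "\<exists>g\<in>D. \<forall>x. w x \<bullet> b = x \<bullet> g"
proof -
  obtain v where v: "v \<in> weyl D" "\<forall>x. v (w x) = x \<and> w (v x) = x"
    using weyl_inv[OF assms(1)] rs_facts[OF assms(2)] by blast
  have "v b \<in> D" using weyl_maps[OF v(1)] rs_facts[OF assms(2)] assms(3) by blast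
  moreover have "w x \<bullet> b = x \<bullet> v b" for x
    using weyl_inner[OF assms(1), of x "v b"] rs_facts[OF assms(2)] v(2) by simp
  ultimately show ?thesis by blast
qed

lemma orbit_finite:
  assumes "root_system D" "span D = UNIV"
  shows "finite ((\<lambda>w. w l) ` weyl D)"
proof -
  let ?O = "(\<lambda>w. w l) ` weyl D"
  let ?V = "(\<lambda>g. l \<bullet> g) ` D"
  define phi where "phi x = restrict (\<lambda>b. x \<bullet> b) D" for x :: 'a
  have fD: "finite D" using rs_facts[OF assms(1)] by simp
  have "phi ` ?O \<subseteq> (\<Pi>\<^sub>E b\<in>D. ?V)"
  proof
    fix z assume "z \<in> phi ` ?O"
    then obtain w where w: "w \<in> weyl D" "z = phi (w l)" by auto
    show "z \<in> (\<Pi>\<^sub>E b\<in>D. ?V)"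
      unfolding w(2) phi_def using weyl_adj[OF w(1) assms(1)] by (auto simp: PiE_iff)
  qed
  then have "finite (phi ` ?O)" by (rule finite_subset) (use fD in \<open>auto intro: finite_PiE\<close>)
  moreover have "inj_on phi ?O"
  proof (rule inj_onI)
    fix x y assume "phi x = phi y"
    then have "\<forall>b\<in>D. x \<bullet> b = y \<bullet> b" unfolding phi_def by (metis restrict_apply')
    then show "x = y" using span_eq_det[OF assms(2)] by blast
  qed
  ultimately show ?thesis by (rule finite_imageD)
qed

lemma weyl_max:
  assumes rs: "root_system D" and sp: "span D = UNIV"
    and r0: "\<forall>a\<in>D. l0 \<bullet> a \<noteq> 0" and r: "\<forall>a\<in>D. l \<bullet> a \<noteq> 0"
  shows "\<exists>w\<in>weyl D. \<forall>a\<in>D. l0 \<bullet> a > 0 \<longrightarrow> w l \<bullet> a > 0"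
proof -
  let ?O = "(\<lambda>w. w l) ` weyl D"
  have fO: "finite ?O" by (rule orbit_finite[OF rs sp])
  have ne: "?O \<noteq> {}" using weyl.weyl_id by blast
  define m where "m = Max ((\<lambda>x. x \<bullet> l0) ` ?O)"
  have "m \<in> (\<lambda>x. x \<bullet> l0) ` ?O" unfolding m_def using fO ne by (intro Max_in) auto
  then obtain w where w: "w \<in> weyl D" "m = w l \<bullet> l0" by auto
  have mx: "v \<in> weyl D \<Longrightarrow> v l \<bullet> l0 \<le> m" for v unfolding m_def using fO by (intro Max_ge) auto
  show ?thesis
  proof (intro bexI[OF _ w(1)] ballI impI)
    fix a assume a: "a \<in> D" "l0 \<bullet> a > 0"
    obtain g where g: "g \<in> D" "\<forall>x. w x \<bullet> a = x \<bullet> g" using weyl_adj[OF w(1) rs a(1)] by blast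
    have nz: "w l \<bullet> a \<noteq> 0" using g r by auto
    show "w l \<bullet> a > 0"
    proof (rule ccontr)
      assume "\<not> w l \<bullet> a > 0"
      with nz have neg: "w l \<bullet> a < 0" by simp
      have a0: "a \<noteq> 0" using a rs_facts[OF rs] by auto
      then have aa: "a \<bullet> a > 0" by simp
      have "(refl a \<circ> w) \<in> weyl D" using weyl.weyl_step[OF a(1) w(1)] .
      then have le: "refl a (w l) \<bullet> l0 \<le> m" using mx by fastforce
      have "refl a (w l) \<bullet> l0 = w l \<bullet> l0 - (2 * (w l \<bullet> a) / (a \<bullet> a)) * (a \<bullet> l0)"
        by (simp add: refl_def inner_diff_left)
      moreover have "(2 * (w l \<bullet> a) / (a \<bullet> a)) * (a \<bullet> l0) < 0"
        using neg aa a(2) by (simp add: inner_commute mult_neg_pos divide_neg_pos)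
      ultimately show False using le w(2) by linarith
    qed
  qed
qed

lemma perturb:
  fixes c l0 :: "'a::euclidean_space"
  assumes "finite D" "\<forall>a\<in>D. l0 \<bullet> a \<noteq> 0"
  shows "\<exists>l. \<forall>a\<in>D. l \<bullet> a \<noteq> 0 \<and> (c \<bullet> a > 0 \<longrightarrow> l \<bullet> a > 0) \<and> (c \<bullet> a < 0 \<longrightarrow> l \<bullet> a < 0)"
proof -
  let ?P = "\<lambda>e a. (c + e *\<^sub>R l0) \<bullet> a \<noteq> 0 \<and> (c \<bullet> a > 0 \<longrightarrow> (c + e *\<^sub>R l0) \<bullet> a > 0) \<and> (c \<bullet> a < 0 \<longrightarrow> (c + e *\<^sub>R l0) \<bullet> a < 0)"
  have "\<forall>a\<in>D. eventually (\<lambda>e. ?P e a) (at_right (0::real))"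
  proof
    fix a assume aD: "a \<in> D"
    have nz: "l0 \<bullet> a \<noteq> 0" using assms aD by auto
    show "eventually (\<lambda>e. ?P e a) (at_right (0::real))"
    proof (cases "c \<bullet> a = 0")
      case True
      then show ?thesis unfolding eventually_at_right_field
        using nz by (intro exI[of _ 1]) (auto simp: inner_add_left)
    next
      case False
      let ?b = "\<bar>c \<bullet> a\<bar> / (\<bar>l0 \<bullet> a\<bar> + 1)"
      have bpos: "?b > 0" using False by simp
      have key: "\<bar>e * (l0 \<bullet> a)\<bar> < \<bar>c \<bullet> a\<bar>" if "e > 0" "e < ?b" for e
      proof -
        have "\<bar>e * (l0 \<bullet> a)\<bar> = e * \<bar>l0 \<bullet> a\<bar>" using that by (simp add: abs_mult)
        also have "\<dots> \<le> e * (\<bar>l0 \<bullet> a\<bar> + 1)" using that by simp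
        also have "\<dots> < \<bar>c \<bullet> a\<bar>" using that by (simp add: pos_less_divide_eq mult.commute)
        finally show ?thesis .
      qed
      have "?P e a" if "e > 0" "e < ?b" for e
      proof -
        have k: "\<bar>e * (l0 \<bullet> a)\<bar> < \<bar>c \<bullet> a\<bar>" using key that .
        have eq: "(c + e *\<^sub>R l0) \<bullet> a = c \<bullet> a + e * (l0 \<bullet> a)" by (simp add: inner_add_left)
        show ?thesis unfolding eq using k False by (cases "c \<bullet> a > 0") (auto simp: abs_less_iff abs_if split: if_splits)
      qed
      then show ?thesis unfolding eventually_at_right_field
        using bpos by (intro exI[of _ ?b]) auto
    qed
  qed
  then have "eventually (\<lambda>e. \<forall>a\<in>D. ?P e a) (at_right (0::real))"
    using assms(1) by (rule eventually_ball_finite[rotated])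
  then obtain b where "b > 0" "\<forall>y>0. y < b \<longrightarrow> (\<forall>a\<in>D. ?P y a)"
    unfolding eventually_at_right_field by auto
  then have "\<forall>a\<in>D. ?P (b/2) a" by auto
  then show ?thesis by blast
qed

lemma convex_R_half: "convex (R_half Dp)"
  unfolding convex_def
proof (intro ballI allI impI)
  fix x y and u v :: real
  assume x: "x \<in> R_half Dp" and y: "y \<in> R_half Dp" and uv: "0 \<le> u" "0 \<le> v" "u + v = 1"
  obtain b where b: "x = (\<Sum>a\<in>Dp. (b a / 2) *\<^sub>R a)" "\<forall>a\<in>Dp. 0 \<le> b a \<and> b a \<le> 1"
    using x unfolding R_half_def by auto
  obtain c where c: "y = (\<Sum>a\<in>Dp. (c a / 2) *\<^sub>R a)" "\<forall>a\<in>Dp. 0 \<le> c a \<and> c a \<le> 1"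
    using y unfolding R_half_def by auto
  define d where "d a = u * b a + v * c a" for a
  have "u *\<^sub>R x + v *\<^sub>R y = (\<Sum>a\<in>Dp. (d a / 2) *\<^sub>R a)"
    unfolding b(1) c(1) d_def scaleR_sum_right sum.distrib[symmetric]
    by (rule sum.cong) (auto simp: scaleR_add_left[symmetric] add_divide_distrib)
  moreover have "\<forall>a\<in>Dp. 0 \<le> d a \<and> d a \<le> 1"
  proof
    fix a assume "a \<in> Dp"
    then have "0 \<le> b a" "b a \<le> 1" "0 \<le> c a" "c a \<le> 1" using b c by auto
    then have "u * b a \<le> u" "v * c a \<le> v" using uv by (auto intro: mult_left_le)
    then show "0 \<le> d a \<and> d a \<le> 1" unfolding d_def using uv \<open>0 \<le> b a\<close> \<open>0 \<le> c a\<close> by simp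
  qed
  ultimately show "u *\<^sub>R x + v *\<^sub>R y \<in> R_half Dp" unfolding R_half_def
    by (intro CollectI exI[of _ d]) simp
qed


theorem lemma5p1:
  fixes Dk Dp Dkplus Dgplus :: "'a::euclidean_space set"
  assumes "root_system (Dk \<union> Dp)"
    and "root_system Dk"
    and "span Dk = UNIV"
    and "finite Dp" and "0 \<notin> Dp"
    and "uminus ` Dp = Dp"
    and "\<forall>u\<in>weyl Dk. u ` Dp = Dp"
    and "positive_system (Dk \<union> Dp) Dgplus"
    and "Dkplus = Dk \<inter> Dgplus"
  shows "R_half Dp =
     convex hull {u (rho_n Dp Dgplus w) | u w. u \<in> weyl Dk \<and> w \<in> weyl_one (Dk \<union> Dp) Dgplus Dkplus}"
proof -
  define D where "D = Dk \<union> Dp"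
  have rs: "root_system D" using assms(1) D_def by simp
  note rsD = rs_facts[OF rs]
  note rsK = rs_facts[OF assms(2)]
  have sp: "span D = UNIV" using assms(3) span_mono[of Dk D] D_def by auto
  obtain l0 where l0: "\<forall>a\<in>D. l0 \<bullet> a \<noteq> 0" and Dg: "Dgplus = {a\<in>D. l0 \<bullet> a > 0}"
    using assms(8) D_def unfolding positive_system_def by auto
  have Dkp: "Dkplus = {a\<in>Dk. l0 \<bullet> a > 0}" using assms(9) Dg D_def by auto
  define V where "V l = (1/2) *\<^sub>R (\<Sum>a\<in>{a\<in>Dp. 0 < l \<bullet> a}. a)" for l
  define S where "S = {u (rho_n Dp Dgplus w) | u w. u \<in> weyl Dk \<and> w \<in> weyl_one (Dk \<union> Dp) Dgplus Dkplus}"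
  have fDp: "finite Dp" using assms(4) .
  have A: "u (rho_n Dp Dgplus w) = V (u (w l0))" if u: "u \<in> weyl Dk" and w: "w \<in> weyl D" for u w
  proof -
    obtain wi where wi: "wi \<in> weyl D" "\<forall>x. wi (w x) = x \<and> w (wi x) = x"
      using weyl_inv[OF w] rsD by blast
    have set1: "{b\<in>Dp. b \<in> w ` Dgplus} = {b\<in>Dp. 0 < w l0 \<bullet> b}"
    proof (intro Collect_cong conj_cong refl)
      fix b assume b: "b \<in> Dp"
      then have bD: "b \<in> D" using D_def by simp
      show "(b \<in> w ` Dgplus) = (0 < w l0 \<bullet> b)"
      proof
        assume "b \<in> w ` Dgplus"
        then obtain a where "a \<in> D" "l0 \<bullet> a > 0" "b = w a" using Dg by auto
        then show "0 < w l0 \<bullet> b" using weyl_inner[OF w rsD(2)] by simp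
      next
        assume pos: "0 < w l0 \<bullet> b"
        have "wi b \<in> D" using weyl_maps[OF wi(1) rsD(3) bD] .
        moreover have "l0 \<bullet> wi b = w l0 \<bullet> b" using weyl_inner[OF w rsD(2), of l0 "wi b"] wi(2) by simp
        ultimately have "wi b \<in> Dgplus" using Dg pos by simp
        then show "b \<in> w ` Dgplus" using wi(2) by (metis image_eqI)
      qed
    qed
    have lin: "linear u" using weyl_linear[OF u] .
    have inj: "inj u" using weyl_inner[OF u rsK(2)]
      by (metis inj_on_def weyl_inv[OF u rsK(2)])
    have img: "u ` {b\<in>Dp. 0 < w l0 \<bullet> b} = {a\<in>Dp. 0 < u (w l0) \<bullet> a}"
    proof -
      have uDp: "u ` Dp = Dp" using assms(7) u by blast
      have "u ` {b\<in>Dp. 0 < w l0 \<bullet> b} = {a \<in> u ` Dp. 0 < u (w l0) \<bullet> a}"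
        using weyl_inner[OF u rsK(2)] inj by (auto simp: inj_eq)
      then show ?thesis using uDp by simp
    qed
    have "u (rho_n Dp Dgplus w) = (1/2) *\<^sub>R (\<Sum>b\<in>{b\<in>Dp. 0 < w l0 \<bullet> b}. u b)"
      unfolding rho_n_def set1 using lin by (simp add: linear_scale linear_sum comp_def)
    also have "\<dots> = V (u (w l0))"
      unfolding V_def img[symmetric] using inj by (simp add: sum.reindex inj_on_subset[OF inj])
    finally show ?thesis .
  qed
  have VR: "V l \<in> R_half Dp" for l
  proof -
    define b where "b a = (if 0 < l \<bullet> a then 1 else 0::real)" for a
    have e: "V l = (\<Sum>a\<in>Dp. (b a / 2) *\<^sub>R a)"
      unfolding V_def b_def scaleR_sum_right sum.inter_filter[OF fDp]
      by (rule sum.cong) auto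
    have bb: "\<forall>a\<in>Dp. 0 \<le> b a \<and> b a \<le> 1" unfolding b_def by auto
    show ?thesis unfolding R_half_def
      by (rule CollectI, rule exI[of _ b]) (use e bb in simp)
  qed
  have wone: "weyl_one (Dk \<union> Dp) Dgplus Dkplus \<subseteq> weyl D" unfolding weyl_one_def D_def by auto
  have SR: "S \<subseteq> R_half Dp"
  proof
    fix x assume "x \<in> S"
    then obtain u w where uw: "x = u (rho_n Dp Dgplus w)" "u \<in> weyl Dk" "w \<in> weyl_one (Dk \<union> Dp) Dgplus Dkplus"
      unfolding S_def by auto
    note uw = uw(1,2) subsetD[OF wone uw(3)]
    have "x = V (u (w l0))" using A[OF uw(2) uw(3)] uw(1) by simp
    then show "x \<in> R_half Dp" using VR by simp
  qed
  have fS: "finite S"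
  proof (rule finite_subset)
    show "S \<subseteq> (\<lambda>B. (1/2) *\<^sub>R (\<Sum>a\<in>B. a)) ` Pow Dp"
    proof
      fix x assume "x \<in> S"
      then obtain u w where uw: "x = u (rho_n Dp Dgplus w)" "u \<in> weyl Dk" "w \<in> weyl_one (Dk \<union> Dp) Dgplus Dkplus"
        unfolding S_def by auto
      have "x = V (u (w l0))" using A[OF uw(2) subsetD[OF wone uw(3)]] uw(1) by simp
      then show "x \<in> (\<lambda>B. (1/2) *\<^sub>R (\<Sum>a\<in>B. a)) ` Pow Dp"
        unfolding V_def by (intro image_eqI[of _ _ "{a\<in>Dp. 0 < u (w l0) \<bullet> a}"]) auto
    qed
    show "finite ((\<lambda>B. (1/2) *\<^sub>R (\<Sum>a\<in>B. a)) ` Pow Dp)" using fDp by simp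
  qed
  have B1: "V l \<in> S" if lr: "\<forall>a\<in>D. l \<bullet> a \<noteq> 0" for l
  proof -
    have l0k: "\<forall>a\<in>Dk. l0 \<bullet> a \<noteq> 0" "\<forall>a\<in>Dk. l \<bullet> a \<noteq> 0" using l0 lr D_def by auto
    obtain u' where u': "u' \<in> weyl Dk" "\<forall>a\<in>Dk. l0 \<bullet> a > 0 \<longrightarrow> u' l \<bullet> a > 0"
      using weyl_max[OF assms(2) assms(3) l0k] by blast
    obtain u where u: "u \<in> weyl Dk" "\<forall>x. u (u' x) = x \<and> u' (u x) = x"
      using weyl_inv[OF u'(1)] rsK by blast
    define l2 where "l2 = u' l"
    have u'D: "u' b \<in> D" if "b \<in> D" for b
    proof -
      have "u' ` Dp = Dp" using assms(7) u'(1) by blast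
      then show ?thesis using that weyl_maps[OF u'(1) rsK(3)] D_def by auto
    qed
    have uD: "u b \<in> D" if "b \<in> D" for b
    proof -
      have "u ` Dp = Dp" using assms(7) u(1) by blast
      then show ?thesis using that weyl_maps[OF u(1) rsK(3)] D_def by auto
    qed
    have l2r: "\<forall>a\<in>D. l2 \<bullet> a \<noteq> 0"
    proof
      fix a assume "a \<in> D"
      have "l2 \<bullet> a = u' l \<bullet> u' (u a)" using u(2) l2_def by simp
      also have "\<dots> = l \<bullet> u a" using weyl_inner[OF u'(1) rsK(2)] .
      finally show "l2 \<bullet> a \<noteq> 0" using lr uD \<open>a \<in> D\<close> by simp
    qed
    obtain w' where w': "w' \<in> weyl D" "\<forall>a\<in>D. l0 \<bullet> a > 0 \<longrightarrow> w' l2 \<bullet> a > 0"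
      using weyl_max[OF rs sp l0 l2r] by blast
    obtain w where w: "w \<in> weyl D" "\<forall>x. w (w' x) = x \<and> w' (w x) = x"
      using weyl_inv[OF w'(1)] rsD by blast
    have w'D: "w' b \<in> D" if "b \<in> D" for b using weyl_maps[OF w'(1) rsD(3) that] .
    have sgn: "l0 \<bullet> g > 0 \<longleftrightarrow> w' l2 \<bullet> g > 0" if "g \<in> D" for g
    proof
      assume "w' l2 \<bullet> g > 0"
      show "l0 \<bullet> g > 0"
      proof (rule ccontr)
        assume "\<not> l0 \<bullet> g > 0"
        then have "l0 \<bullet> (- g) > 0" using l0 that by (auto simp: inner_minus_right)
        then have "w' l2 \<bullet> (- g) > 0" using w'(2) rsD(4)[OF that] by blast
        then show False using \<open>w' l2 \<bullet> g > 0\<close> by (simp add: inner_minus_right)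
      qed
    qed (use w' that in auto)
    have key: "w l0 \<bullet> b > 0 \<longleftrightarrow> l2 \<bullet> b > 0" if "b \<in> D" for b
    proof -
      have e1: "w l0 \<bullet> b = l0 \<bullet> w' b" using weyl_inner[OF w'(1) rsD(2), of "w l0" b] w(2) by simp
      have e2: "l2 \<bullet> b = w' l2 \<bullet> w' b" using weyl_inner[OF w'(1) rsD(2)] by simp
      show ?thesis unfolding e1 e2 using sgn[OF w'D[OF that]] .
    qed
    have wone1: "w \<in> weyl_one (Dk \<union> Dp) Dgplus Dkplus"
      unfolding weyl_one_def
    proof (intro CollectI conjI)
      show "w \<in> weyl (Dk \<union> Dp)" using w(1) D_def by simp
      show "w ` chamber Dgplus \<subseteq> chamber Dkplus"
      proof (rule subsetI, unfold chamber_def, safe)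
        fix x a assume x: "\<forall>a\<in>Dgplus. 0 < x \<bullet> a" and a: "a \<in> Dkplus"
        have aD: "a \<in> D" "a \<in> Dk" "l0 \<bullet> a > 0" using a Dkp D_def by auto
        have "l2 \<bullet> a > 0" using u'(2) aD l2_def by simp
        then have "w l0 \<bullet> a > 0" using key aD(1) by simp
        moreover have "w l0 \<bullet> a = l0 \<bullet> w' a" using weyl_inner[OF w'(1) rsD(2), of "w l0" a] w(2) by simp
        ultimately have "w' a \<in> Dgplus" using Dg w'D[OF aD(1)] by simp
        then have "0 < x \<bullet> w' a" using x by blast
        moreover have "w x \<bullet> a = x \<bullet> w' a" using weyl_inner[OF w'(1) rsD(2), of "w x" a] w(2) by simp
        ultimately show "0 < w x \<bullet> a" by simp
      qed
    qed
    have "u (rho_n Dp Dgplus w) = V (u (w l0))" using A[OF u(1) w(1)] .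
    also have "\<dots> = V l"
    proof -
      have "{a\<in>Dp. 0 < u (w l0) \<bullet> a} = {a\<in>Dp. 0 < l \<bullet> a}"
      proof (intro Collect_cong conj_cong refl)
        fix g assume g: "g \<in> Dp"
        have gD: "g \<in> D" using g D_def by simp
        have e1: "u (w l0) \<bullet> g = w l0 \<bullet> u' g" using weyl_inner[OF u'(1) rsK(2), of "u (w l0)" g] u(2) by simp
        have e2: "l \<bullet> g = l2 \<bullet> u' g" using weyl_inner[OF u'(1) rsK(2)] l2_def by simp
        show "(0 < u (w l0) \<bullet> g) = (0 < l \<bullet> g)" unfolding e1 e2 using key[OF u'D[OF gD]] .
      qed
      then show ?thesis unfolding V_def by simp
    qed
    finally have "V l = u (rho_n Dp Dgplus w)" by simp
    then show ?thesis unfolding S_def using u(1) wone1 by auto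
  qed
  have "R_half Dp \<subseteq> convex hull S"
  proof
    fix p assume p: "p \<in> R_half Dp"
    show "p \<in> convex hull S"
    proof (rule ccontr)
      assume np: "p \<notin> convex hull S"
      have "closed (convex hull S)" using finite_imp_compact_convex_hull[OF fS] compact_imp_closed by blast
      then obtain a b where ab: "a \<bullet> p < b" "\<forall>x\<in>convex hull S. b < a \<bullet> x"
        using separating_hyperplane_closed_point[OF convex_convex_hull _ np] by blast
      obtain l where l: "\<forall>g\<in>D. l \<bullet> g \<noteq> 0 \<and> ((-a) \<bullet> g > 0 \<longrightarrow> l \<bullet> g > 0) \<and> ((-a) \<bullet> g < 0 \<longrightarrow> l \<bullet> g < 0)"
        using perturb[OF rsD(1) l0, of "-a"] by blast
      have "\<forall>g\<in>D. l \<bullet> g \<noteq> 0" using l by simp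
      then have "V l \<in> S" by (rule B1)
      then have "V l \<in> convex hull S" by (rule hull_inc)
      then have lt: "b < a \<bullet> V l" using ab(2) by (rule bspec[rotated])
      obtain c where c: "p = (\<Sum>g\<in>Dp. (c g / 2) *\<^sub>R g)" "\<forall>g\<in>Dp. 0 \<le> c g \<and> c g \<le> 1"
        using p unfolding R_half_def by auto
      have "(-a) \<bullet> p = (\<Sum>g\<in>Dp. (c g / 2) * ((-a) \<bullet> g))"
        unfolding c(1) by (simp add: inner_sum_right)
      also have "\<dots> \<le> (\<Sum>g\<in>Dp. (if 0 < l \<bullet> g then (1/2) * ((-a) \<bullet> g) else 0))"
      proof (rule sum_mono)
        fix g assume g: "g \<in> Dp"
        then have gD: "g \<in> D" using D_def by simp
        have cg: "0 \<le> c g" "c g \<le> 1" using c(2) g by auto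
        show "(c g / 2) * ((-a) \<bullet> g) \<le> (if 0 < l \<bullet> g then (1/2) * ((-a) \<bullet> g) else 0)"
        proof (cases "0 < l \<bullet> g")
          case True
          have lg: "(0 < (-a) \<bullet> g \<longrightarrow> 0 < l \<bullet> g) \<and> ((-a) \<bullet> g < 0 \<longrightarrow> l \<bullet> g < 0)" using l gD by blast
          have "(-a) \<bullet> g \<ge> 0"
          proof (rule ccontr)
            assume "\<not> (-a) \<bullet> g \<ge> 0"
            then have "l \<bullet> g < 0" using lg by simp
            then show False using True by simp
          qed
          then have "c g * ((-a) \<bullet> g) \<le> 1 * ((-a) \<bullet> g)" using cg by (intro mult_right_mono) auto
          then show ?thesis using True by simp
        next
          case False
          have lg: "(0 < (-a) \<bullet> g \<longrightarrow> 0 < l \<bullet> g) \<and> ((-a) \<bullet> g < 0 \<longrightarrow> l \<bullet> g < 0)" using l gD by blast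
          have "(-a) \<bullet> g \<le> 0"
          proof (rule ccontr)
            assume "\<not> (-a) \<bullet> g \<le> 0"
            then have "l \<bullet> g > 0" using lg by simp
            then show False using False by simp
          qed
          then show ?thesis using False cg by (simp add: mult_nonneg_nonpos)
        qed
      qed
      also have "\<dots> = (1/2) * (\<Sum>g\<in>Dp. (if 0 < l \<bullet> g then (-a) \<bullet> g else 0))"
        by (simp add: sum_distrib_left if_distrib del: inner_minus_left) (rule sum.cong, auto)
      also have "\<dots> = (1/2) * (\<Sum>g\<in>{g\<in>Dp. 0 < l \<bullet> g}. (-a) \<bullet> g)"
        by (simp only: sum.inter_filter[OF fDp])
      also have "\<dots> = (-a) \<bullet> V l"
        unfolding V_def by (simp only: inner_scaleR_right inner_sum_right)
      finally have "(-a) \<bullet> p \<le> (-a) \<bullet> V l" .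
      then have "a \<bullet> V l \<le> a \<bullet> p" by (simp only: inner_minus_left)
      then show False using lt ab(1) by linarith
    qed
  qed
  moreover have "convex hull S \<subseteq> R_half Dp"
    by (rule hull_minimal[of S "R_half Dp" convex, OF SR convex_R_half])
  ultimately have "R_half Dp = convex hull S" by (rule equalityI)
  then show ?thesis by (simp only: S_def)
qed

end
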